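(* Let $\mathbb{P}$ and $\mathbb{Q}$ be probability distributions with support $\mathcal{X}$, let $x_1,\dots,x_k$ be i.i.d. from $\mathbb{P}$ and $y_1,\dots,y_k$ i.i.d. from $\mathbb{Q}$ (independent), $k\ge2$, and let $f_{LS}(z)=-(z-1)^2+1$. For a critic $C:\mathcal{X}\to\mathbb{R}$ put $\hat\mu_{C(x)}=\frac1k\sum_{i=1}^kC(x_i)$, $\hat\mu_{C(y)}=\frac1k\sum_{i=1}^kC(y_i)$, $\hat\mu_C=\frac1k\sum_{i=1}^k\frac{C(x_i)+C(y_i)}{2}$, $\hat\sigma_{C(x)}=\frac1{k-1}\sum_{i=1}^k(C(x_i)-\hat\mu_{C(x)})^2$, $\hat\sigma_{C(y)}=\frac1{k-1}\sum_{i=1}^k(C(y_i)-\hat\mu_{C(y)})^2$. Then $$\sup_{C}\ \frac1k\Big(\hat\sigma_{C(x)}+\hat\sigma_{C(y)}-\sum_{i=1}^k\big(C(x_i)-\hat\mu_{C(y)}-1\big)^2-\sum_{j=1}^k\big(\hat\mu_{C(x)}-C(y_j)-1\big)^2\Big)+2,$$ $$\sup_{C}\ \frac2k\Big(\hat\sigma_{C(y)}-\sum_{i=1}^k\big(C(x_i)-\hat\mu_{C(y)}-1\big)^2\Big)+2,$$ $$\sup_{C}\ -\frac1k\Big(\tfrac12\hat\sigma_{C(x)}+\tfrac12\hat\sigma_{C(y)}+\sum_{i=1}^k\big(C(x_i)-\hat\mu_{C}-1\big)^2+\sum_{j=1}^k\big(\hat\mu_{C}-C(y_j)-1\big)^2\Big)+2$$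 are unbiased estimators of $\mathrm{D}^{Ra}_{f_{LS}}(\mathbb{P},\mathbb{Q})$, $\mathrm{D}^{Ralf}_{f_{LS}}(\mathbb{P},\mathbb{Q})$ and $\mathrm{D}^{Rc}_{f_{LS}}(\mathbb{P},\mathbb{Q})$ respectively.
   Context: Suprema range over (measurable) critics $C:\mathcal{X}\to\mathbb{R}$ with the relevant moments finite. With $\mathbb{M}=\frac12\mathbb{P}+\frac12\mathbb{Q}$: $\mathrm{D}^{Ra}_f(\mathbb{P},\mathbb{Q})=\sup_C \mathbb{E}_{x\sim\mathbb{P}}[f(C(x)-\mathbb{E}_{y\sim\mathbb{Q}}C(y))]+\mathbb{E}_{y\sim\mathbb{Q}}[f(\mathbb{E}_{x\sim\mathbb{P}}C(x)-C(y))]$; $\mathrm{D}^{Ralf}_f(\mathbb{P},\mathbb{Q})=\sup_C 2\,\mathbb{E}_{x\sim\mathbb{P}}[f(C(x)-\mathbb{E}_{y\sim\mathbb{Q}}C(y))]$; $\mathrm{D}^{Rc}_f(\mathbb{P},\mathbb{Q})=\sup_C \mathbb{E}_{x\sim\mathbb{P}}[f(C(x)-\mathbb{E}_{m\sim\mathbb{M}}C(m))]+\mathbb{E}_{y\sim\mathbb{Q}}[f(\mathbb{E}_{m\sim\mathbb{M}}C(m)-C(y))]$. *)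

theory Defs
  imports "HOL-Probability.Probability"
begin

definition f_LS :: "real \<Rightarrow> real" where
  "f_LS z = - ((z - 1)^2) + 1"

definition critics :: "'a measure \<Rightarrow> 'a measure \<Rightarrow> ('a \<Rightarrow> real) set" where
  "critics P Q = {C. C \<in> borel_measurable P \<and> integrable P (\<lambda>x. (C x)^2)
                      \<and> integrable Q (\<lambda>y. (C y)^2)}"

text \<open>Population objectives for a fixed critic; E over M = (P+Q)/2 is written out.\<close>
definition obj_Ra :: "(real \<Rightarrow> real) \<Rightarrow> 'a measure \<Rightarrow> 'a measure \<Rightarrow> ('a \<Rightarrow> real) \<Rightarrow> real" where
  "obj_Ra f P Q C = (\<integral>x. f (C x - (\<integral>y. C y \<partial>Q)) \<partial>P) + (\<integral>y. f ((\<integral>x. C x \<partial>P) - C y) \<partial>Q)"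

definition obj_Ralf :: "(real \<Rightarrow> real) \<Rightarrow> 'a measure \<Rightarrow> 'a measure \<Rightarrow> ('a \<Rightarrow> real) \<Rightarrow> real" where
  "obj_Ralf f P Q C = 2 * (\<integral>x. f (C x - (\<integral>y. C y \<partial>Q)) \<partial>P)"

definition mix_mean :: "'a measure \<Rightarrow> 'a measure \<Rightarrow> ('a \<Rightarrow> real) \<Rightarrow> real" where
  "mix_mean P Q C = (1/2) * (\<integral>x. C x \<partial>P) + (1/2) * (\<integral>y. C y \<partial>Q)"

definition obj_Rc :: "(real \<Rightarrow> real) \<Rightarrow> 'a measure \<Rightarrow> 'a measure \<Rightarrow> ('a \<Rightarrow> real) \<Rightarrow> real" where
  "obj_Rc f P Q C = (\<integral>x. f (C x - mix_mean P Q C) \<partial>P) + (\<integral>y. f (mix_mean P Q C - C y) \<partial>Q)"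

definition D_Ra :: "(real \<Rightarrow> real) \<Rightarrow> 'a measure \<Rightarrow> 'a measure \<Rightarrow> real" where
  "D_Ra f P Q = (SUP C\<in>critics P Q. obj_Ra f P Q C)"

definition D_Ralf :: "(real \<Rightarrow> real) \<Rightarrow> 'a measure \<Rightarrow> 'a measure \<Rightarrow> real" where
  "D_Ralf f P Q = (SUP C\<in>critics P Q. obj_Ralf f P Q C)"

definition D_Rc :: "(real \<Rightarrow> real) \<Rightarrow> 'a measure \<Rightarrow> 'a measure \<Rightarrow> real" where
  "D_Rc f P Q = (SUP C\<in>critics P Q. obj_Rc f P Q C)"

text \<open>Sample statistics; samples are indexed 0..k-1.\<close>
definition mu_hat :: "nat \<Rightarrow> ('a \<Rightarrow> real) \<Rightarrow> (nat \<Rightarrow> 'a) \<Rightarrow> real" where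
  "mu_hat k C xs = (\<Sum>i<k. C (xs i)) / real k"

definition mu_hat_mix :: "nat \<Rightarrow> ('a \<Rightarrow> real) \<Rightarrow> (nat \<Rightarrow> 'a) \<Rightarrow> (nat \<Rightarrow> 'a) \<Rightarrow> real" where
  "mu_hat_mix k C xs ys = (\<Sum>i<k. (C (xs i) + C (ys i)) / 2) / real k"

definition sigma_hat :: "nat \<Rightarrow> ('a \<Rightarrow> real) \<Rightarrow> (nat \<Rightarrow> 'a) \<Rightarrow> real" where
  "sigma_hat k C xs = (\<Sum>i<k. (C (xs i) - mu_hat k C xs)^2) / (real k - 1)"

definition est_Ra :: "nat \<Rightarrow> ('a \<Rightarrow> real) \<Rightarrow> (nat \<Rightarrow> 'a) \<Rightarrow> (nat \<Rightarrow> 'a) \<Rightarrow> real" where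
  "est_Ra k C xs ys = (1 / real k) * (sigma_hat k C xs + sigma_hat k C ys
      - (\<Sum>i<k. (C (xs i) - mu_hat k C ys - 1)^2)
      - (\<Sum>j<k. (mu_hat k C xs - C (ys j) - 1)^2)) + 2"

definition est_Ralf :: "nat \<Rightarrow> ('a \<Rightarrow> real) \<Rightarrow> (nat \<Rightarrow> 'a) \<Rightarrow> (nat \<Rightarrow> 'a) \<Rightarrow> real" where
  "est_Ralf k C xs ys = (2 / real k) * (sigma_hat k C ys
      - (\<Sum>i<k. (C (xs i) - mu_hat k C ys - 1)^2)) + 2"

definition est_Rc :: "nat \<Rightarrow> ('a \<Rightarrow> real) \<Rightarrow> (nat \<Rightarrow> 'a) \<Rightarrow> (nat \<Rightarrow> 'a) \<Rightarrow> real" where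
  "est_Rc k C xs ys = - ((1 / real k) * ((1/2) * sigma_hat k C xs + (1/2) * sigma_hat k C ys
      + (\<Sum>i<k. (C (xs i) - mu_hat_mix k C xs ys - 1)^2)
      + (\<Sum>j<k. (mu_hat_mix k C xs ys - C (ys j) - 1)^2))) + 2"

definition sample_measure :: "nat \<Rightarrow> 'a measure \<Rightarrow> 'a measure \<Rightarrow> ((nat \<Rightarrow> 'a) \<times> (nat \<Rightarrow> 'a)) measure" where
  "sample_measure k P Q = (PiM {..<k} (\<lambda>_. P)) \<Otimes>\<^sub>M (PiM {..<k} (\<lambda>_. Q))"

definition unbiased_for :: "((nat \<Rightarrow> 'a) \<times> (nat \<Rightarrow> 'a)) measure \<Rightarrow> ((nat \<Rightarrow> 'a) \<times> (nat \<Rightarrow> 'a) \<Rightarrow> real) \<Rightarrow> real \<Rightarrow> bool" where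
  "unbiased_for S T \<theta> \<longleftrightarrow> integrable S T \<and> (\<integral>\<omega>. T \<omega> \<partial>S) = \<theta>"

end

theory Submission
  imports Defs
begin


lemma pim_gen:
  assumes M: "prob_space M" and fin: "finite I"
    and g: "\<And>l. l \<in> I \<Longrightarrow> integrable M (g l :: _ \<Rightarrow> real)"
  shows "integrable (PiM I (\<lambda>_. M)) (\<lambda>xs. \<Prod>l\<in>I. g l (xs l))"
    "(\<integral>xs. (\<Prod>l\<in>I. g l (xs l)) \<partial>PiM I (\<lambda>_. M)) = (\<Prod>l\<in>I. integral\<^sup>L M (g l))"
proof -
  interpret PS: product_prob_space "\<lambda>_::'b. M"
    by (simp add: product_prob_space_def product_sigma_finite_def prob_space_imp_sigma_finite M product_prob_space_axioms_def)
  show "integrable (PiM I (\<lambda>_. M)) (\<lambda>xs. \<Prod>l\<in>I. g l (xs l))"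
    by (rule PS.product_integrable_prod[OF fin g])
  show "(\<integral>xs. (\<Prod>l\<in>I. g l (xs l)) \<partial>PiM I (\<lambda>_. M)) = (\<Prod>l\<in>I. integral\<^sup>L M (g l))"
    by (rule PS.product_integral_prod[OF fin g])
qed

lemma pim_one:
  assumes M: "prob_space M" and fin: "finite I" and i: "i \<in> I" and h: "integrable M (h :: _ \<Rightarrow> real)"
  shows "integrable (PiM I (\<lambda>_. M)) (\<lambda>xs. h (xs i))"
    "(\<integral>xs. h (xs i) \<partial>PiM I (\<lambda>_. M)) = integral\<^sup>L M h"
proof -
  define g where "g = (\<lambda>l x. if l = i then h x else (1::real))"
  have gi: "\<And>l. l \<in> I \<Longrightarrow> integrable M (g l)"
    subgoal for l using h M by (cases "l = i") (auto simp: g_def prob_space.finite_measure finite_measure.integrable_const)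
    done
  have eq: "(\<lambda>xs. \<Prod>l\<in>I. g l (xs l)) = (\<lambda>xs. h (xs i))"
    using i fin by (auto simp: g_def prod.delta')
  have eq2: "(\<Prod>l\<in>I. integral\<^sup>L M (g l)) = integral\<^sup>L M h"
  proof -
    have "(\<Prod>l\<in>I. integral\<^sup>L M (g l)) = (\<Prod>l\<in>I. if l = i then integral\<^sup>L M h else 1)"
      using M by (intro prod.cong) (auto simp: g_def prob_space.prob_space)
    then show ?thesis using i fin by (simp add: prod.delta')
  qed
  show "integrable (PiM I (\<lambda>_. M)) (\<lambda>xs. h (xs i))"
    using pim_gen(1)[OF M fin, where g=g, OF gi] eq by simp
  show "(\<integral>xs. h (xs i) \<partial>PiM I (\<lambda>_. M)) = integral\<^sup>L M h"
    using pim_gen(2)[OF M fin, where g=g, OF gi] eq eq2 by simp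
qed

lemma pim_two:
  assumes M: "prob_space M" and fin: "finite I" and i: "i \<in> I" and j: "j \<in> I" and ij: "i \<noteq> j"
    and h: "integrable M (h :: _ \<Rightarrow> real)" and h2: "integrable M (h2 :: _ \<Rightarrow> real)"
  shows "integrable (PiM I (\<lambda>_. M)) (\<lambda>xs. h (xs i) * h2 (xs j))"
    "(\<integral>xs. h (xs i) * h2 (xs j) \<partial>PiM I (\<lambda>_. M)) = integral\<^sup>L M h * integral\<^sup>L M h2"
proof -
  define g where "g = (\<lambda>l x. if l = i then h x else if l = j then h2 x else (1::real))"
  have gi: "\<And>l. l \<in> I \<Longrightarrow> integrable M (g l)"
    subgoal for l using h h2 M by (cases "l = i"; cases "l = j") (auto simp: g_def prob_space.finite_measure finite_measure.integrable_const)
    done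
  have pe: "\<And>xs. (\<Prod>l\<in>I. g l (xs l)) = h (xs i) * h2 (xs j)"
  proof -
    fix xs :: "'b \<Rightarrow> 'a"
    have "(\<Prod>l\<in>I. g l (xs l)) = g i (xs i) * (\<Prod>l\<in>I - {i}. g l (xs l))"
      using i fin by (simp add: prod.remove)
    also have "(\<Prod>l\<in>I - {i}. g l (xs l)) = g j (xs j) * (\<Prod>l\<in>I - {i} - {j}. g l (xs l))"
      using j ij fin by (subst prod.remove[of _ j]) auto
    also have "(\<Prod>l\<in>I - {i} - {j}. g l (xs l)) = 1"
      by (intro prod.neutral) (auto simp: g_def)
    finally show "(\<Prod>l\<in>I. g l (xs l)) = h (xs i) * h2 (xs j)" using ij by (simp add: g_def)
  qed
  have pe2: "(\<Prod>l\<in>I. integral\<^sup>L M (g l)) = integral\<^sup>L M h * integral\<^sup>L M h2"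
  proof -
    have "(\<Prod>l\<in>I. integral\<^sup>L M (g l)) = integral\<^sup>L M (g i) * (\<Prod>l\<in>I - {i}. integral\<^sup>L M (g l))"
      using i fin by (simp add: prod.remove)
    also have "(\<Prod>l\<in>I - {i}. integral\<^sup>L M (g l)) = integral\<^sup>L M (g j) * (\<Prod>l\<in>I - {i} - {j}. integral\<^sup>L M (g l))"
      using j ij fin by (subst prod.remove[of _ j]) auto
    also have "(\<Prod>l\<in>I - {i} - {j}. integral\<^sup>L M (g l)) = 1"
      using M by (intro prod.neutral) (auto simp: g_def prob_space.prob_space)
    finally show ?thesis using ij by (simp add: g_def)
  qed
  show "integrable (PiM I (\<lambda>_. M)) (\<lambda>xs. h (xs i) * h2 (xs j))"
    using pim_gen(1)[OF M fin, where g=g, OF gi] pe by simp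
  show "(\<integral>xs. h (xs i) * h2 (xs j) \<partial>PiM I (\<lambda>_. M)) = integral\<^sup>L M h * integral\<^sup>L M h2"
    using pim_gen(2)[OF M fin, where g=g, OF gi] pe pe2 by simp
qed

lemma pim_moments:
  fixes C :: "'a \<Rightarrow> real"
  assumes M: "prob_space M" and Cm[measurable]: "C \<in> borel_measurable M"
    and C2: "integrable M (\<lambda>x. (C x)^2)"
  shows "integrable (PiM {..<k} (\<lambda>_. M)) (\<lambda>xs. \<Sum>i<k. C (xs i))"
    "(\<integral>xs. (\<Sum>i<k. C (xs i)) \<partial>PiM {..<k} (\<lambda>_. M)) = real k * integral\<^sup>L M C"
    "integrable (PiM {..<k} (\<lambda>_. M)) (\<lambda>xs. \<Sum>i<k. (C (xs i))^2)"
    "(\<integral>xs. (\<Sum>i<k. (C (xs i))^2) \<partial>PiM {..<k} (\<lambda>_. M)) = real k * (\<integral>x. (C x)^2 \<partial>M)"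
    "integrable (PiM {..<k} (\<lambda>_. M)) (\<lambda>xs. (\<Sum>i<k. C (xs i))^2)"
    "(\<integral>xs. (\<Sum>i<k. C (xs i))^2 \<partial>PiM {..<k} (\<lambda>_. M))
       = real k * (\<integral>x. (C x)^2 \<partial>M) + real k * (real k - 1) * (integral\<^sup>L M C)^2"
proof -
  interpret prob_space M by fact
  have C1: "integrable M C" using square_integrable_imp_integrable[OF Cm C2] .
  let ?PX = "PiM {..<k} (\<lambda>_. M)"
  let ?a = "integral\<^sup>L M C" and ?p = "\<integral>x. (C x)^2 \<partial>M"
  show "integrable ?PX (\<lambda>xs. \<Sum>i<k. C (xs i))"
    by (rule Bochner_Integration.integrable_sum, rule pim_one(1)[OF M _ _ C1]) auto
  show "(\<integral>xs. (\<Sum>i<k. C (xs i)) \<partial>?PX) = real k * ?a"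
  proof -
    have "(\<integral>xs. (\<Sum>i<k. C (xs i)) \<partial>?PX) = (\<Sum>i<k. \<integral>xs. C (xs i) \<partial>?PX)"
      by (rule Bochner_Integration.integral_sum, rule pim_one(1)[OF M _ _ C1]) auto
    also have "\<dots> = (\<Sum>i<k. ?a)" by (intro sum.cong) (auto simp: pim_one(2)[OF M _ _ C1])
    finally show ?thesis by simp
  qed
  show "integrable ?PX (\<lambda>xs. \<Sum>i<k. (C (xs i))^2)"
    by (intro Bochner_Integration.integrable_sum pim_one(1)[OF M, where h="\<lambda>x. (C x)^2"]) (auto intro: C2)
  show "(\<integral>xs. (\<Sum>i<k. (C (xs i))^2) \<partial>?PX) = real k * ?p"
  proof -
    have "(\<integral>xs. (\<Sum>i<k. (C (xs i))^2) \<partial>?PX) = (\<Sum>i<k. \<integral>xs. (C (xs i))^2 \<partial>?PX)"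
      by (rule Bochner_Integration.integral_sum, rule pim_one(1)[OF M _ _ C2]) auto
    also have "\<dots> = (\<Sum>i<k. ?p)" by (intro sum.cong) (auto simp: pim_one(2)[OF M _ _ C2])
    finally show ?thesis by simp
  qed
  have sq: "\<And>xs. (\<Sum>i<k. C (xs i))^2 = (\<Sum>i<k. \<Sum>j<k. C (xs i) * C (xs j))"
    by (simp add: power2_eq_square sum_product)
  have intij: "\<And>i j. i < k \<Longrightarrow> j < k \<Longrightarrow> integrable ?PX (\<lambda>xs. C (xs i) * C (xs j))
     \<and> (\<integral>xs. C (xs i) * C (xs j) \<partial>?PX) = (if i = j then ?p else ?a^2)"
  proof -
    fix i j assume i: "i < k" and j: "j < k"
    show "integrable ?PX (\<lambda>xs. C (xs i) * C (xs j))
     \<and> (\<integral>xs. C (xs i) * C (xs j) \<partial>?PX) = (if i = j then ?p else ?a^2)"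
    proof (cases "i = j")
      case True
      then show ?thesis using pim_one[OF M _ _ C2, of "{..<k}" i] i by (simp add: power2_eq_square)
    next
      case False
      then show ?thesis using pim_two[OF M _ _ _ False C1 C1, of "{..<k}"] i j by (simp add: power2_eq_square)
    qed
  qed
  show "integrable ?PX (\<lambda>xs. (\<Sum>i<k. C (xs i))^2)"
    unfolding sq using intij by (intro Bochner_Integration.integrable_sum) auto
  have "(\<integral>xs. (\<Sum>i<k. C (xs i))^2 \<partial>?PX) = (\<Sum>i<k. \<Sum>j<k. (if i = j then ?p else ?a^2))"
    unfolding sq using intij
    by (subst Bochner_Integration.integral_sum, auto intro!: Bochner_Integration.integrable_sum sum.cong simp: Bochner_Integration.integral_sum)
  also have "\<dots> = (\<Sum>i<k. ?a^2 * real k + (?p - ?a^2))"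
  proof (rule sum.cong[OF refl])
    fix i assume "i \<in> {..<k}"
    have "(\<Sum>j<k. (if i = j then ?p else ?a^2)) = (\<Sum>j<k. ?a^2 + (if i = j then ?p - ?a^2 else 0))"
      by (intro sum.cong) auto
    also have "\<dots> = ?a^2 * real k + (?p - ?a^2)" using \<open>i \<in> {..<k}\<close>
      by (simp add: sum.distrib sum.delta)
    finally show "(\<Sum>j<k. (if i = j then ?p else ?a^2)) = ?a^2 * real k + (?p - ?a^2)" .
  qed
  also have "\<dots> = real k * ?p + real k * (real k - 1) * ?a^2"
    by (simp add: algebra_simps)
  finally show "(\<integral>xs. (\<Sum>i<k. C (xs i))^2 \<partial>?PX) = real k * ?p + real k * (real k - 1) * ?a^2" .
qed

lemma pair_fst:
  fixes f :: "'a \<Rightarrow> real"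
  assumes M1: "prob_space M1" and M2: "prob_space M2" and f: "integrable M1 f"
  shows "has_bochner_integral (M1 \<Otimes>\<^sub>M M2) (\<lambda>\<omega>. f (fst \<omega>)) (integral\<^sup>L M1 f)"
proof -
  interpret M2: prob_space M2 by fact
  have fm[measurable]: "f \<in> borel_measurable M1" using f by auto
  have d: "distr (M1 \<Otimes>\<^sub>M M2) M1 fst = M1" by (rule M2.distr_pair_fst)
  have "integrable (M1 \<Otimes>\<^sub>M M2) (\<lambda>\<omega>. f (fst \<omega>))"
    using integrable_distr_eq[OF measurable_fst fm, of M2] f d by simp
  moreover have "integral\<^sup>L (M1 \<Otimes>\<^sub>M M2) (\<lambda>\<omega>. f (fst \<omega>)) = integral\<^sup>L M1 f"
    using integral_distr[OF measurable_fst fm, of M2] d by simp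
  ultimately show ?thesis by (simp add: has_bochner_integral_iff)
qed

lemma pair_snd:
  fixes g :: "'b \<Rightarrow> real"
  assumes M1: "prob_space M1" and M2: "prob_space M2" and g: "integrable M2 g"
  shows "has_bochner_integral (M1 \<Otimes>\<^sub>M M2) (\<lambda>\<omega>. g (snd \<omega>)) (integral\<^sup>L M2 g)"
proof -
  interpret M1: prob_space M1 by fact
  interpret M2: prob_space M2 by fact
  interpret PS: pair_sigma_finite M1 M2 by unfold_locales
  have gm[measurable]: "g \<in> borel_measurable M2" using g by auto
  have h: "has_bochner_integral (M2 \<Otimes>\<^sub>M M1) (\<lambda>\<omega>. g (fst \<omega>)) (integral\<^sup>L M2 g)"
    by (rule pair_fst[OF M2 M1 g])
  have e: "(\<lambda>(x,y). (\<lambda>\<omega>. g (snd \<omega>)) (y, x)) = (\<lambda>\<omega>. g (fst \<omega>))" by auto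
  have "integrable (M1 \<Otimes>\<^sub>M M2) (\<lambda>\<omega>. g (snd \<omega>))"
    using h PS.integrable_product_swap_iff[of "\<lambda>\<omega>. g (snd \<omega>)"]
    unfolding e has_bochner_integral_iff by blast
  moreover have "integral\<^sup>L (M1 \<Otimes>\<^sub>M M2) (\<lambda>\<omega>. g (snd \<omega>)) = integral\<^sup>L M2 g"
    using h PS.integral_product_swap[of "\<lambda>\<omega>. g (snd \<omega>)"]
    unfolding e has_bochner_integral_iff by simp
  ultimately show ?thesis by (simp add: has_bochner_integral_iff)
qed

lemma pair_mult:
  fixes f :: "'a \<Rightarrow> real" and g :: "'b \<Rightarrow> real"
  assumes M1: "prob_space M1" and M2: "prob_space M2" and f: "integrable M1 f" and g: "integrable M2 g"
  shows "has_bochner_integral (M1 \<Otimes>\<^sub>M M2) (\<lambda>\<omega>. f (fst \<omega>) * g (snd \<omega>)) (integral\<^sup>L M1 f * integral\<^sup>L M2 g)"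
proof -
  interpret M1: prob_space M1 by fact
  interpret M2: prob_space M2 by fact
  interpret PS: pair_sigma_finite M1 M2 by unfold_locales
  have fm[measurable]: "f \<in> borel_measurable M1" using f by auto
  have gm[measurable]: "g \<in> borel_measurable M2" using g by auto
  have int: "integrable (M1 \<Otimes>\<^sub>M M2) (\<lambda>\<omega>. f (fst \<omega>) * g (snd \<omega>))"
  proof (rule PS.Fubini_integrable)
    show "(\<lambda>\<omega>. f (fst \<omega>) * g (snd \<omega>)) \<in> borel_measurable (M1 \<Otimes>\<^sub>M M2)" by measurable
    have "integrable M1 (\<lambda>x. \<bar>f x\<bar> * (\<integral>y. \<bar>g y\<bar> \<partial>M2))"
      using f by (intro integrable_mult_left integrable_abs)
    then show "integrable M1 (\<lambda>x. \<integral>y. norm (f (fst (x, y)) * g (snd (x, y))) \<partial>M2)"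
      by (simp add: abs_mult)
    show "AE x in M1. integrable M2 (\<lambda>y. f (fst (x, y)) * g (snd (x, y)))"
      using g by simp
  qed
  have "integral\<^sup>L (M1 \<Otimes>\<^sub>M M2) (\<lambda>\<omega>. f (fst \<omega>) * g (snd \<omega>)) = (\<integral>x. (\<integral>y. f x * g y \<partial>M2) \<partial>M1)"
    using PS.integral_fst'[OF int] by simp
  also have "\<dots> = integral\<^sup>L M1 f * integral\<^sup>L M2 g" by simp
  finally show ?thesis using int by (simp add: has_bochner_integral_iff)
qed

lemma comb:
  fixes u1 u2 :: "'a \<Rightarrow> real" and v1 v2 :: "'b \<Rightarrow> real"
  assumes M1: "prob_space M1" and M2: "prob_space M2"
    and iu1: "integrable M1 u1" and iu2: "integrable M1 u2" and iu3: "integrable M1 (\<lambda>x. (u1 x)^2)"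
    and iv1: "integrable M2 v1" and iv2: "integrable M2 v2" and iv3: "integrable M2 (\<lambda>x. (v1 x)^2)"
  shows "has_bochner_integral (M1 \<Otimes>\<^sub>M M2)
     (\<lambda>\<omega>. c0 + c1 * u1 (fst \<omega>) + c2 * u2 (fst \<omega>) + c3 * (u1 (fst \<omega>))^2
        + c4 * v1 (snd \<omega>) + c5 * v2 (snd \<omega>) + c6 * (v1 (snd \<omega>))^2 + c7 * (u1 (fst \<omega>) * v1 (snd \<omega>)))
     (c0 + c1 * integral\<^sup>L M1 u1 + c2 * integral\<^sup>L M1 u2 + c3 * (\<integral>x. (u1 x)^2 \<partial>M1)
        + c4 * integral\<^sup>L M2 v1 + c5 * integral\<^sup>L M2 v2 + c6 * (\<integral>x. (v1 x)^2 \<partial>M2)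
        + c7 * (integral\<^sup>L M1 u1 * integral\<^sup>L M2 v1))"
proof -
  interpret M1: prob_space M1 by fact
  interpret M2: prob_space M2 by fact
  interpret PS: pair_prob_space M1 M2 by unfold_locales
  have h0: "has_bochner_integral (M1 \<Otimes>\<^sub>M M2) (\<lambda>_. c0) c0"
    by (simp add: has_bochner_integral_iff PS.prob_space)
  note f1 = pair_fst[OF M1 M2 iu1] and f2 = pair_fst[OF M1 M2 iu2] and f3 = pair_fst[OF M1 M2 iu3]
  note s1 = pair_snd[OF M1 M2 iv1] and s2 = pair_snd[OF M1 M2 iv2] and s3 = pair_snd[OF M1 M2 iv3]
  note m = pair_mult[OF M1 M2 iu1 iv1]
  show ?thesis
    by (intro has_bochner_integral_add has_bochner_integral_mult_right h0 f1 f2 f3 s1 s2 s3 m)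
qed



lemma sum_sq_shift:
  fixes u :: "nat \<Rightarrow> real"
  shows "(\<Sum>i<k. (u i - c)^2) = (\<Sum>i<k. (u i)^2) - 2 * c * (\<Sum>i<k. u i) + real k * c^2"
  by (simp add: power2_diff sum.distrib sum_subtractf sum_distrib_left mult_ac)

lemma stats:
  fixes C :: "'a \<Rightarrow> real" and xs ys :: "nat \<Rightarrow> 'a"
  assumes k: "k \<ge> 2"
  defines "sx \<equiv> \<Sum>i<k. C (xs i)" and "qx \<equiv> \<Sum>i<k. (C (xs i))^2"
  shows "mu_hat k C xs = sx / real k"
    "sigma_hat k C xs = (qx - sx^2 / real k) / (real k - 1)"
    "(\<Sum>i<k. (C (xs i) - c)^2) = qx - 2 * c * sx + real k * c^2"
    "(\<Sum>i<k. (c - C (xs i))^2) = qx - 2 * c * sx + real k * c^2"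
proof -
  have K: "real k \<ge> 2" using k by simp
  show mu: "mu_hat k C xs = sx / real k" by (simp add: mu_hat_def sx_def)
  show sh: "\<And>c. (\<Sum>i<k. (C (xs i) - c)^2) = qx - 2 * c * sx + real k * c^2"
    unfolding sx_def qx_def by (rule sum_sq_shift)
  show "(\<Sum>i<k. (c - C (xs i))^2) = qx - 2 * c * sx + real k * c^2"
    using sh[of c] by (simp add: power2_commute)
  show "sigma_hat k C xs = (qx - sx^2 / real k) / (real k - 1)"
    unfolding sigma_hat_def mu sh using K by (simp add: field_simps power2_eq_square)
qed

lemma est_Ra_poly:
  fixes C :: "'a \<Rightarrow> real" and xs ys :: "nat \<Rightarrow> 'a"
  assumes k: "k \<ge> 2"
  defines "sx \<equiv> \<Sum>i<k. C (xs i)" and "qx \<equiv> \<Sum>i<k. (C (xs i))^2"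
    and "sy \<equiv> \<Sum>i<k. C (ys i)" and "qy \<equiv> \<Sum>i<k. (C (ys i))^2" and "K \<equiv> real k"
  shows "est_Ra k C xs ys = 0 + (4/K) * sx + ((1/(K-1) - 1)/K) * qx + ((-1/(K*(K-1)) - 1/K)/K) * sx^2
     + (-4/K) * sy + ((1/(K-1) - 1)/K) * qy + ((-1/(K*(K-1)) - 1/K)/K) * sy^2 + (4/K^2) * (sx * sy)"
proof -
  have K: "K \<ge> 2" using k by (simp add: K_def)
  note sx = stats[OF k, where C=C and xs=xs, folded sx_def qx_def K_def]
  note sy = stats[OF k, where C=C and xs=ys, folded sy_def qy_def K_def]
  have A: "(\<Sum>i<k. (C (xs i) - mu_hat k C ys - 1)^2) = qx - 2 * (sy/K + 1) * sx + K * (sy/K + 1)^2"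
    using sx(3)[of "mu_hat k C ys + 1"] by (simp add: sy(1) diff_diff_eq)
  have B: "(\<Sum>j<k. (mu_hat k C xs - C (ys j) - 1)^2) = qy - 2 * (sx/K - 1) * sy + K * (sx/K - 1)^2"
    using sy(4)[of "mu_hat k C xs - 1"] by (simp add: sx(1) algebra_simps)
  show ?thesis
  proof -
    have K0: "K \<noteq> 0" and K1: "K - 1 \<noteq> 0" using K by auto
    define iK where "iK = inverse K"
    define iL where "iL = inverse (K - 1)"
    have hK: "K * iK = 1" using K0 by (simp add: iK_def)
    have hL: "(K - 1) * iL = 1" using K1 by (simp add: iL_def)
    show ?thesis
      unfolding est_Ra_def A B sx(2) sy(2) K_def[symmetric]
      unfolding divide_inverse inverse_mult_distrib
        power2_eq_square iK_def[symmetric] iL_def[symmetric]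
      using hK hL by algebra
  qed
qed

lemma est_Ralf_poly:
  fixes C :: "'a \<Rightarrow> real" and xs ys :: "nat \<Rightarrow> 'a"
  assumes k: "k \<ge> 2"
  defines "sx \<equiv> \<Sum>i<k. C (xs i)" and "qx \<equiv> \<Sum>i<k. (C (xs i))^2"
    and "sy \<equiv> \<Sum>i<k. C (ys i)" and "qy \<equiv> \<Sum>i<k. (C (ys i))^2" and "K \<equiv> real k"
  shows "est_Ralf k C xs ys = 0 + (4/K) * sx + (-2/K) * qx + 0 * sx^2
     + (-4/K) * sy + (2/(K*(K-1))) * qy + ((2/K)*(-1/(K*(K-1)) - 1/K)) * sy^2 + (4/K^2) * (sx * sy)"
proof -
  have K: "K \<ge> 2" using k by (simp add: K_def)
  note sx = stats[OF k, where C=C and xs=xs, folded sx_def qx_def K_def]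
  note sy = stats[OF k, where C=C and xs=ys, folded sy_def qy_def K_def]
  have A: "(\<Sum>i<k. (C (xs i) - mu_hat k C ys - 1)^2) = qx - 2 * (sy/K + 1) * sx + K * (sy/K + 1)^2"
    using sx(3)[of "mu_hat k C ys + 1"] by (simp add: sy(1) diff_diff_eq)
  have K0: "K \<noteq> 0" and K1: "K - 1 \<noteq> 0" using K by auto
  define iK where "iK = inverse K"
  define iL where "iL = inverse (K - 1)"
  have hK: "K * iK = 1" using K0 by (simp add: iK_def)
  have hL: "(K - 1) * iL = 1" using K1 by (simp add: iL_def)
  show ?thesis
    unfolding est_Ralf_def A sx(2) sy(2) K_def[symmetric]
    unfolding divide_inverse inverse_mult_distrib
      power2_eq_square iK_def[symmetric] iL_def[symmetric]
    using hK hL by algebra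
qed

lemma est_Rc_poly:
  fixes C :: "'a \<Rightarrow> real" and xs ys :: "nat \<Rightarrow> 'a"
  assumes k: "k \<ge> 2"
  defines "sx \<equiv> \<Sum>i<k. C (xs i)" and "qx \<equiv> \<Sum>i<k. (C (xs i))^2"
    and "sy \<equiv> \<Sum>i<k. C (ys i)" and "qy \<equiv> \<Sum>i<k. (C (ys i))^2" and "K \<equiv> real k"
  shows "est_Rc k C xs ys = 0 + (2/K) * sx + (-(1/K)*(1/(2*(K-1)) + 1)) * qx
     + (-(1/K)*(-1/(2*K*(K-1)) - 1/(2*K))) * sx^2
     + (-2/K) * sy + (-(1/K)*(1/(2*(K-1)) + 1)) * qy
     + (-(1/K)*(-1/(2*K*(K-1)) - 1/(2*K))) * sy^2 + (1/K^2) * (sx * sy)"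
proof -
  have K: "K \<ge> 2" using k by (simp add: K_def)
  note sx = stats[OF k, where C=C and xs=xs, folded sx_def qx_def K_def]
  note sy = stats[OF k, where C=C and xs=ys, folded sy_def qy_def K_def]
  have mm: "mu_hat_mix k C xs ys = (sx + sy) / (2 * K)"
  proof -
    have hs: "(\<Sum>i<k. (C (xs i) + C (ys i)) / 2) = (sx + sy) / 2"
      by (simp add: sx_def sy_def sum.distrib sum_divide_distrib[symmetric])
    show ?thesis unfolding mu_hat_mix_def hs K_def by simp
  qed
  have A: "(\<Sum>i<k. (C (xs i) - mu_hat_mix k C xs ys - 1)^2)
      = qx - 2 * ((sx + sy) / (2 * K) + 1) * sx + K * ((sx + sy) / (2 * K) + 1)^2"
    using sx(3)[of "mu_hat_mix k C xs ys + 1"] by (simp add: mm diff_diff_eq)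
  have B: "(\<Sum>j<k. (mu_hat_mix k C xs ys - C (ys j) - 1)^2)
      = qy - 2 * ((sx + sy) / (2 * K) - 1) * sy + K * ((sx + sy) / (2 * K) - 1)^2"
    using sy(4)[of "mu_hat_mix k C xs ys - 1"] by (simp add: mm algebra_simps)
  have K0: "K \<noteq> 0" and K1: "K - 1 \<noteq> 0" using K by auto
  define iK where "iK = inverse K"
  define iL where "iL = inverse (K - 1)"
  define i2 where "i2 = inverse (2::real)"
  have hK: "K * iK = 1" using K0 by (simp add: iK_def)
  have hL: "(K - 1) * iL = 1" using K1 by (simp add: iL_def)
  have h2: "2 * i2 = 1" by (simp add: i2_def)
  show ?thesis
    unfolding est_Rc_def A B sx(2) sy(2) K_def[symmetric]
    unfolding divide_inverse inverse_mult_distrib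
      power2_eq_square iK_def[symmetric] iL_def[symmetric] i2_def[symmetric]
    using hK hL h2 by algebra
qed



lemma quad:
  fixes C :: "'a \<Rightarrow> real"
  assumes M: "prob_space M" and C1: "integrable M C" and C2: "integrable M (\<lambda>x. (C x)^2)"
  shows "(\<integral>x. \<alpha> * (C x)^2 + \<beta> * C x + \<gamma> \<partial>M) = \<alpha> * (\<integral>x. (C x)^2 \<partial>M) + \<beta> * integral\<^sup>L M C + \<gamma>"
proof -
  interpret prob_space M by fact
  have "has_bochner_integral M (\<lambda>x. \<alpha> * (C x)^2 + \<beta> * C x + \<gamma>) (\<alpha> * (\<integral>x. (C x)^2 \<partial>M) + \<beta> * integral\<^sup>L M C + \<gamma>)"
    using C1 C2 by (intro has_bochner_integral_add has_bochner_integral_mult_right)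
      (auto simp: has_bochner_integral_iff prob_space)
  then show ?thesis by (simp add: has_bochner_integral_iff)
qed

lemma hbi: "has_bochner_integral M f v \<Longrightarrow> v = w \<Longrightarrow> integrable M f \<and> integral\<^sup>L M f = w"
  by (simp add: has_bochner_integral_iff)

theorem corollary4p2:
  fixes P Q :: "'a measure" and k :: nat
  assumes "prob_space P" and "prob_space Q" and "sets Q = sets P" and "k \<ge> 2"
  shows "(\<forall>C\<in>critics P Q.
            unbiased_for (sample_measure k P Q) (\<lambda>(xs, ys). est_Ra k C xs ys) (obj_Ra f_LS P Q C)
          \<and> unbiased_for (sample_measure k P Q) (\<lambda>(xs, ys). est_Ralf k C xs ys) (obj_Ralf f_LS P Q C)
          \<and> unbiased_for (sample_measure k P Q) (\<lambda>(xs, ys). est_Rc k C xs ys) (obj_Rc f_LS P Q C))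
       \<and> D_Ra f_LS P Q = (SUP C\<in>critics P Q. \<integral>\<omega>. (case \<omega> of (xs, ys) \<Rightarrow> est_Ra k C xs ys) \<partial>sample_measure k P Q)
       \<and> D_Ralf f_LS P Q = (SUP C\<in>critics P Q. \<integral>\<omega>. (case \<omega> of (xs, ys) \<Rightarrow> est_Ralf k C xs ys) \<partial>sample_measure k P Q)
       \<and> D_Rc f_LS P Q = (SUP C\<in>critics P Q. \<integral>\<omega>. (case \<omega> of (xs, ys) \<Rightarrow> est_Rc k C xs ys) \<partial>sample_measure k P Q)"
proof -
  have main: "unbiased_for (sample_measure k P Q) (\<lambda>(xs, ys). est_Ra k C xs ys) (obj_Ra f_LS P Q C)
          \<and> unbiased_for (sample_measure k P Q) (\<lambda>(xs, ys). est_Ralf k C xs ys) (obj_Ralf f_LS P Q C)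
          \<and> unbiased_for (sample_measure k P Q) (\<lambda>(xs, ys). est_Rc k C xs ys) (obj_Rc f_LS P Q C)"
    if C: "C \<in> critics P Q" for C
  proof -
    have CmP[measurable]: "C \<in> borel_measurable P" and C2P: "integrable P (\<lambda>x. (C x)^2)"
      and C2Q: "integrable Q (\<lambda>x. (C x)^2)" using C by (auto simp: critics_def)
    have CmQ[measurable]: "C \<in> borel_measurable Q"
      using CmP measurable_cong_sets[OF assms(3) refl] by blast
    interpret P: prob_space P by fact
    interpret Q: prob_space Q by fact
    have C1P: "integrable P C" by (rule P.square_integrable_imp_integrable[OF CmP C2P])
    have C1Q: "integrable Q C" by (rule Q.square_integrable_imp_integrable[OF CmQ C2Q])
    have pX: "prob_space (PiM {..<k} (\<lambda>_. P))" by (rule prob_space_PiM) (simp add: assms(1))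
    have pY: "prob_space (PiM {..<k} (\<lambda>_. Q))" by (rule prob_space_PiM) (simp add: assms(2))
    note mx = pim_moments[OF assms(1) CmP C2P, of k]
    note my = pim_moments[OF assms(2) CmQ C2Q, of k]
    note cb = comb[OF pX pY mx(1) mx(3) mx(5) my(1) my(3) my(5)]
    define a where "a = integral\<^sup>L P C"
    define b where "b = integral\<^sup>L Q C"
    define p where "p = (\<integral>x. (C x)^2 \<partial>P)"
    define q where "q = (\<integral>x. (C x)^2 \<partial>Q)"
    define K where "K = real k"
    have K: "K \<ge> 2" using assms(4) by (simp add: K_def)
    have K0: "K \<noteq> 0" and K1: "K - 1 \<noteq> 0" using K by auto
    define iK where "iK = inverse K"
    define iL where "iL = inverse (K - 1)"
    define i2 where "i2 = inverse (2::real)"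
    have hK: "K * iK = 1" using K0 by (simp add: iK_def)
    have hL: "(K - 1) * iL = 1" using K1 by (simp add: iL_def)
    have h2: "2 * i2 = 1" by (simp add: i2_def)
    note mx' = mx(2,4,6)[folded a_def p_def K_def] and my' = my(2,4,6)[folded b_def q_def K_def]
    have oP: "\<And>c. (\<integral>x. f_LS (C x - c) \<partial>P) = -p + (2*(c+1)) * a + (1 - (c+1)^2)"
    proof -
      fix c
      have eq: "(\<lambda>x. f_LS (C x - c)) = (\<lambda>x. (-1) * (C x)^2 + (2*(c+1)) * C x + (1 - (c+1)^2))"
        by (rule ext) (simp add: f_LS_def power2_eq_square algebra_simps)
      have "(\<integral>x. f_LS (C x - c) \<partial>P) = (\<integral>x. (-1) * (C x)^2 + (2*(c+1)) * C x + (1 - (c+1)^2) \<partial>P)"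
        by (simp only: eq)
      also have "\<dots> = (-1) * p + (2*(c+1)) * a + (1 - (c+1)^2)"
        unfolding a_def p_def by (rule quad[OF assms(1) C1P C2P])
      finally show "(\<integral>x. f_LS (C x - c) \<partial>P) = -p + (2*(c+1)) * a + (1 - (c+1)^2)" by simp
    qed
    have oQ: "\<And>c. (\<integral>x. f_LS (c - C x) \<partial>Q) = -q + (2*(c-1)) * b + (1 - (c-1)^2)"
    proof -
      fix c
      have eq: "(\<lambda>x. f_LS (c - C x)) = (\<lambda>x. (-1) * (C x)^2 + (2*(c-1)) * C x + (1 - (c-1)^2))"
        by (rule ext) (simp add: f_LS_def power2_eq_square algebra_simps)
      have "(\<integral>x. f_LS (c - C x) \<partial>Q) = (\<integral>x. (-1) * (C x)^2 + (2*(c-1)) * C x + (1 - (c-1)^2) \<partial>Q)"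
        by (simp only: eq)
      also have "\<dots> = (-1) * q + (2*(c-1)) * b + (1 - (c-1)^2)"
        unfolding b_def q_def by (rule quad[OF assms(2) C1Q C2Q])
      finally show "(\<integral>x. f_LS (c - C x) \<partial>Q) = -q + (2*(c-1)) * b + (1 - (c-1)^2)" by simp
    qed
    have mixm: "mix_mean P Q C = a/2 + b/2" by (simp add: mix_mean_def a_def b_def)
    have S: "sample_measure k P Q = PiM {..<k} (\<lambda>_. P) \<Otimes>\<^sub>M PiM {..<k} (\<lambda>_. Q)"
      by (simp add: sample_measure_def)
    have e1: "(\<lambda>(xs, ys). est_Ra k C xs ys) = (\<lambda>\<omega>. est_Ra k C (fst \<omega>) (snd \<omega>))"
      and e2: "(\<lambda>(xs, ys). est_Ralf k C xs ys) = (\<lambda>\<omega>. est_Ralf k C (fst \<omega>) (snd \<omega>))"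
      and e3: "(\<lambda>(xs, ys). est_Rc k C xs ys) = (\<lambda>\<omega>. est_Rc k C (fst \<omega>) (snd \<omega>))"
      by (auto simp: split_beta)
    show ?thesis
    proof (intro conjI)
      show "unbiased_for (sample_measure k P Q) (\<lambda>(xs, ys). est_Ra k C xs ys) (obj_Ra f_LS P Q C)"
        unfolding unbiased_for_def S e1
        unfolding est_Ra_poly[OF assms(4)]
        apply (rule hbi[OF cb])
        apply (simp only: mx' my')
        unfolding obj_Ra_def oP oQ b_def[symmetric] a_def[symmetric] K_def[symmetric]
        unfolding divide_inverse inverse_mult_distrib
          power2_eq_square iK_def[symmetric] iL_def[symmetric] i2_def[symmetric]
        using hK hL h2 by algebra
      show "unbiased_for (sample_measure k P Q) (\<lambda>(xs, ys). est_Ralf k C xs ys) (obj_Ralf f_LS P Q C)"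
        unfolding unbiased_for_def S e2
        unfolding est_Ralf_poly[OF assms(4)]
        apply (rule hbi[OF cb])
        apply (simp only: mx' my')
        unfolding obj_Ralf_def oP oQ b_def[symmetric] a_def[symmetric] K_def[symmetric]
        unfolding divide_inverse inverse_mult_distrib
          power2_eq_square iK_def[symmetric] iL_def[symmetric] i2_def[symmetric]
        using hK hL h2 by algebra
      show "unbiased_for (sample_measure k P Q) (\<lambda>(xs, ys). est_Rc k C xs ys) (obj_Rc f_LS P Q C)"
        unfolding unbiased_for_def S e3
        unfolding est_Rc_poly[OF assms(4)]
        apply (rule hbi[OF cb])
        apply (simp only: mx' my')
        unfolding obj_Rc_def mixm oP oQ b_def[symmetric] a_def[symmetric] K_def[symmetric]
        unfolding divide_inverse inverse_mult_distrib
          power2_eq_square iK_def[symmetric] iL_def[symmetric] i2_def[symmetric]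
        using hK hL h2 by algebra
    qed
  qed
  show ?thesis
  proof (intro conjI)
    show "\<forall>C\<in>critics P Q.
            unbiased_for (sample_measure k P Q) (\<lambda>(xs, ys). est_Ra k C xs ys) (obj_Ra f_LS P Q C)
          \<and> unbiased_for (sample_measure k P Q) (\<lambda>(xs, ys). est_Ralf k C xs ys) (obj_Ralf f_LS P Q C)
          \<and> unbiased_for (sample_measure k P Q) (\<lambda>(xs, ys). est_Rc k C xs ys) (obj_Rc f_LS P Q C)"
      using main by blast
  next
    show "D_Ra f_LS P Q = (SUP C\<in>critics P Q. \<integral>\<omega>. (case \<omega> of (xs, ys) \<Rightarrow> est_Ra k C xs ys) \<partial>sample_measure k P Q)"
      unfolding D_Ra_def by (intro SUP_cong refl) (use main in \<open>auto simp: unbiased_for_def\<close>)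
  next
    show "D_Ralf f_LS P Q = (SUP C\<in>critics P Q. \<integral>\<omega>. (case \<omega> of (xs, ys) \<Rightarrow> est_Ralf k C xs ys) \<partial>sample_measure k P Q)"
      unfolding D_Ralf_def by (intro SUP_cong refl) (use main in \<open>auto simp: unbiased_for_def\<close>)
  next
    show "D_Rc f_LS P Q = (SUP C\<in>critics P Q. \<integral>\<omega>. (case \<omega> of (xs, ys) \<Rightarrow> est_Rc k C xs ys) \<partial>sample_measure k P Q)"
      unfolding D_Rc_def by (intro SUP_cong refl) (use main in \<open>auto simp: unbiased_for_def\<close>)
  qed
qed

end
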